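(* Let $C$ be a nonempty proper subset of $V$ and $\lambda=d(\chi_C)$. Then $V^c_O\cap V^c_\lambda$ is contained in an affine subspace of $K$ of codimension $\kappa(C,V\setminus C)$. In particular, if $V^c_O\cap V^c_\lambda$ is a face of codimension one, then $\kappa(C,V\setminus C)=1$, i.e. the cut defined by $C$ is a bond.
   Context: $G=(V,E)$ is a finite connected graph; each edge gives oriented edges $e,\bar e$. Real $1$-cochains are $x$ on oriented edges with $x_{\bar e}=-x_e$, $\langle x,y\rangle=\sum_{e\in E}x_ey_e$, $q(x)=\langle x,x\rangle$. For $f:V\to\mathbb R$, $d(f)(e)=f(\text{head}(e))-f(\text{tail}(e))$; $K=d(\mathbb R^V)$ and $L=d(\mathbb Z^V)$. $V^c_\lambda=\{x\in K: q(x-\lambda)\le q(x-\mu)\ \forall\mu\in L\}$. $\chi_C$ is the characteristic function of $C$. If $G[C]$ has $k$ connected components and $G[V\setminus C]$ has $r$ connected components, the rank of the cut is $\kappa(C,V\setminus C)=k+r-1$; the cut is a bond when this rank is $1$. *)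

theory Defs
  imports "HOL-Analysis.Analysis"
begin

text \<open>A finite graph: vertices are the elements of the finite type 'v, edges the
elements of the finite type 'e; each edge e carries a fixed reference orientation
from tail e to head e (multi-edges and loops allowed). A real 1-cochain is
determined by its values on the reference orientations, i.e. it is a vector in
real^'e (the value on the reversed edge is the negative).\<close>

definition adj_in :: "('e \<Rightarrow> 'v) \<Rightarrow> ('e \<Rightarrow> 'v) \<Rightarrow> 'v set \<Rightarrow> ('v \<times> 'v) set" where
  "adj_in tail head S = {(u, w). u \<in> S \<and> w \<in> S \<and>
      (\<exists>e. (tail e = u \<and> head e = w) \<or> (tail e = w \<and> head e = u))}"

definition components_in :: "('e \<Rightarrow> 'v) \<Rightarrow> ('e \<Rightarrow> 'v) \<Rightarrow> 'v set \<Rightarrow> 'v set set" where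
  "components_in tail head S = S // (Id_on S \<union> (adj_in tail head S)\<^sup>+)"

definition graph_connected :: "('e \<Rightarrow> 'v) \<Rightarrow> ('e \<Rightarrow> 'v) \<Rightarrow> bool" where
  "graph_connected tail head \<longleftrightarrow> card (components_in tail head UNIV) = 1"

definition cut_rank :: "('e \<Rightarrow> 'v) \<Rightarrow> ('e \<Rightarrow> 'v) \<Rightarrow> 'v set \<Rightarrow> nat" where
  "cut_rank tail head C = card (components_in tail head C) + card (components_in tail head (UNIV - C)) - 1"

definition cobd :: "('e \<Rightarrow> 'v) \<Rightarrow> ('e \<Rightarrow> 'v) \<Rightarrow> ('v \<Rightarrow> real) \<Rightarrow> real^'e" where
  "cobd tail head f = (\<chi> e. f (head e) - f (tail e))"

definition cutspaceK :: "('e \<Rightarrow> 'v) \<Rightarrow> ('e \<Rightarrow> 'v) \<Rightarrow> (real^'e) set" where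
  "cutspaceK tail head = range (cobd tail head)"

definition latticeL :: "('e \<Rightarrow> 'v) \<Rightarrow> ('e \<Rightarrow> 'v) \<Rightarrow> (real^'e) set" where
  "latticeL tail head = {cobd tail head (\<lambda>v. of_int (g v)) | g :: 'v \<Rightarrow> int. True}"

definition qf :: "real^'e \<Rightarrow> real" where
  "qf x = (\<Sum>e\<in>UNIV. (x $ e)\<^sup>2)"

definition voronoi :: "('e::finite \<Rightarrow> 'v) \<Rightarrow> ('e \<Rightarrow> 'v) \<Rightarrow> real^'e \<Rightarrow> (real^'e) set" where
  "voronoi tail head lam = {x \<in> cutspaceK tail head. \<forall>\<mu>\<in>latticeL tail head. qf (x - lam) \<le> qf (x - \<mu>)}"

end

theory Submission
  imports Defs
begin

definition RR :: "('e \<Rightarrow> 'v) \<Rightarrow> ('e \<Rightarrow> 'v) \<Rightarrow> 'v set \<Rightarrow> ('v \<times> 'v) set" where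
  "RR tail head S = Id_on S \<union> (adj_in tail head S)\<^sup>+"

lemma adj_sub: "adj_in tail head S \<subseteq> S \<times> S"
  unfolding adj_in_def by auto

lemma adj_sym: "sym (adj_in tail head S)"
  unfolding adj_in_def sym_def by blast

lemma equiv_RR: "equiv S (RR tail head S)"
proof (rule equivI)
  have tr: "(adj_in tail head S)\<^sup>+ \<subseteq> S \<times> S"
    using adj_sub trancl_subset_Sigma by metis
  show "refl_on S (RR tail head S)"
    unfolding refl_on_def RR_def using tr by auto
  show "RR tail head S \<subseteq> S \<times> S" unfolding RR_def using tr by auto
  have "sym ((adj_in tail head S)\<^sup>+)" using sym_trancl adj_sym by metis
  then show "sym (RR tail head S)"
    unfolding RR_def sym_def by auto
  show "trans (RR tail head S)"
    unfolding RR_def trans_def by (auto intro: trancl_trans)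
qed

lemma comps_eq: "components_in tail head S = S // RR tail head S"
  unfolding components_in_def RR_def ..

lemma comp_closed:
  assumes P: "P \<in> components_in tail head S" and u: "u \<in> P" and w: "w \<in> S"
    and e: "(tail e = u \<and> head e = w) \<or> (tail e = w \<and> head e = u)"
  shows "w \<in> P"
proof -
  have eq: "equiv S (RR tail head S)" by (rule equiv_RR)
  have P': "P \<in> S // RR tail head S" using P comps_eq by metis
  have "u \<in> S" using in_quotient_imp_subset[OF eq P'] u by auto
  then have "(u, w) \<in> adj_in tail head S" using w e unfolding adj_in_def by auto
  then have "(u, w) \<in> RR tail head S" unfolding RR_def by auto
  then show ?thesis using in_quotient_imp_closed[OF eq P' u] by auto
qed

lemma comp_props:
  assumes P: "P \<in> components_in tail head S"
  shows "P \<noteq> {}" "P \<subseteq> S"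
  using in_quotient_imp_non_empty[OF equiv_RR] in_quotient_imp_subset[OF equiv_RR] P comps_eq
  by metis+

lemma comp_disj:
  assumes "P \<in> components_in tail head S" "Q \<in> components_in tail head S"
  shows "P = Q \<or> P \<inter> Q = {}"
  using quotient_disj[OF equiv_RR] assms comps_eq by metis

lemma comp_union: "\<Union> (components_in tail head S) = S"
  using Union_quotient[OF equiv_RR] comps_eq by metis

lemma connected_rel:
  assumes "graph_connected tail head"
  shows "(u, w) \<in> RR tail head (UNIV :: 'v set)"
proof -
  have eq: "equiv UNIV (RR tail head (UNIV :: 'v set))" by (rule equiv_RR)
  have "card (UNIV // RR tail head (UNIV :: 'v set)) = 1"
    using assms unfolding graph_connected_def comps_eq .
  then obtain Q where Q: "UNIV // RR tail head (UNIV :: 'v set) = {Q}"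
    by (rule card_1_singletonE)
  have "RR tail head UNIV `` {u} \<in> UNIV // RR tail head (UNIV :: 'v set)"
    by (rule quotientI) simp
  moreover have "RR tail head UNIV `` {w} \<in> UNIV // RR tail head (UNIV :: 'v set)"
    by (rule quotientI) simp
  ultimately have "RR tail head UNIV `` {u} = RR tail head UNIV `` {w}" using Q by auto
  moreover have "w \<in> RR tail head UNIV `` {w}" using eq unfolding equiv_def refl_on_def by auto
  ultimately show ?thesis by auto
qed

definition Dm :: "('e \<Rightarrow> 'v) \<Rightarrow> ('e \<Rightarrow> 'v) \<Rightarrow> real^'v \<Rightarrow> real^'e" where
  "Dm tail head f = cobd tail head (\<lambda>v. f $ v)"

lemma linear_Dm: "linear (Dm tail head)"
  by (rule linearI) (auto simp: Dm_def cobd_def vec_eq_iff algebra_simps)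

lemma K_eq: "cutspaceK tail head = range (Dm tail head)"
proof -
  have "cobd tail head g = Dm tail head (\<chi> v. g v)" for g
    by (simp add: Dm_def)
  then show ?thesis unfolding cutspaceK_def Dm_def by (auto simp: image_def)
qed

lemma kernel_const:
  assumes c: "graph_connected tail head" and D: "Dm tail head h = 0"
  shows "h $ u = h $ w"
proof -
  have "(u, w) \<in> RR tail head UNIV" by (rule connected_rel[OF c])
  moreover have "h $ a = h $ b" if "(a, b) \<in> (adj_in tail head UNIV)\<^sup>+" for a b
    using that
  proof (induction rule: trancl_induct)
    case (base y)
    then obtain e where "(tail e = a \<and> head e = y) \<or> (tail e = y \<and> head e = a)"
      unfolding adj_in_def by auto
    moreover have "h $ head e - h $ tail e = 0"
      using D unfolding Dm_def cobd_def by (metis vec_lambda_beta zero_index)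
    ultimately show ?case by auto
  next
    case (step y z)
    then obtain e where "(tail e = y \<and> head e = z) \<or> (tail e = z \<and> head e = y)"
      unfolding adj_in_def by auto
    moreover have "h $ head e - h $ tail e = 0"
      using D unfolding Dm_def cobd_def by (metis vec_lambda_beta zero_index)
    ultimately show ?case using step by auto
  qed
  ultimately show ?thesis unfolding RR_def by auto
qed

lemma cobd_int:
  assumes "\<And>v. f v \<in> \<int>"
  shows "cobd tail head f \<in> latticeL tail head"
proof -
  have "f = (\<lambda>v. of_int \<lfloor>f v\<rfloor>)"
    using assms by (metis Ints_cases floor_of_int)
  then have "cobd tail head f = cobd tail head (\<lambda>v. of_int \<lfloor>f v\<rfloor>)" by metis
  then show ?thesis unfolding latticeL_def by (intro CollectI exI[of _ "\<lambda>v. \<lfloor>f v\<rfloor>"]) simp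
qed

lemma cobd_diff: "cobd tail head f - cobd tail head g = cobd tail head (\<lambda>v. f v - g v)"
  by (simp add: cobd_def vec_eq_iff)
lemma cobd_add: "cobd tail head f + cobd tail head g = cobd tail head (\<lambda>v. f v + g v)"
  by (simp add: cobd_def vec_eq_iff)
lemma cobd_neg: "- cobd tail head f = cobd tail head (\<lambda>v. - f v)"
  by (simp add: cobd_def vec_eq_iff)
lemma cobd_zero: "0 = cobd tail head (\<lambda>v. 0)"
  by (simp add: cobd_def vec_eq_iff)

lemma qf_inner: "qf x = x \<bullet> x"
  unfolding qf_def inner_vec_def by (simp add: power2_eq_square)

lemma qf_diff: "qf (x - y) = qf x - 2 * (x \<bullet> y) + y \<bullet> y"
  unfolding qf_inner by (simp add: inner_diff_left inner_diff_right inner_commute)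

lemma key_pos:
  assumes V0: "\<forall>\<mu>\<in>L. qf (x - 0) \<le> qf (x - \<mu>)"
    and Vl: "\<forall>\<mu>\<in>L. qf (x - l) \<le> qf (x - \<mu>)"
    and m1: "\<nu> \<in> L" and m2: "l - \<nu> \<in> L" and eq: "l \<bullet> \<nu> = \<nu> \<bullet> \<nu>"
  shows "2 * (x \<bullet> \<nu>) = \<nu> \<bullet> \<nu>"
proof -
  have 1: "qf (x - 0) \<le> qf (x - \<nu>)" using V0 m1 by blast
  have 2: "qf (x - l) \<le> qf (x - (l - \<nu>))" using Vl m2 by blast
  have e1: "qf (x - \<nu>) = qf x - 2 * (x \<bullet> \<nu>) + \<nu> \<bullet> \<nu>" by (rule qf_diff)
  have e2: "x - (l - \<nu>) = (x - l) - (- \<nu>)" by simp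
  have e3: "qf ((x - l) - (- \<nu>)) = qf (x - l) - 2 * ((x - l) \<bullet> (- \<nu>)) + (- \<nu>) \<bullet> (- \<nu>)"
    by (rule qf_diff)
  have e4: "(x - l) \<bullet> (- \<nu>) = l \<bullet> \<nu> - x \<bullet> \<nu>" by (simp add: inner_diff_left)
  have e5: "(- \<nu>) \<bullet> (- \<nu>) = \<nu> \<bullet> \<nu>" by simp
  show ?thesis using 1 2 e1 e2 e3 e4 e5 eq by simp
qed

lemma key_neg:
  assumes V0: "\<forall>\<mu>\<in>L. qf (x - 0) \<le> qf (x - \<mu>)"
    and Vl: "\<forall>\<mu>\<in>L. qf (x - l) \<le> qf (x - \<mu>)"
    and m1: "- \<nu> \<in> L" and m2: "l + \<nu> \<in> L" and eq: "l \<bullet> \<nu> = - (\<nu> \<bullet> \<nu>)"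
  shows "2 * (x \<bullet> \<nu>) = - (\<nu> \<bullet> \<nu>)"
proof -
  have 1: "qf (x - 0) \<le> qf (x - (- \<nu>))" using V0 m1 by blast
  have 2: "qf (x - l) \<le> qf (x - (l + \<nu>))" using Vl m2 by blast
  have e1: "qf (x - (- \<nu>)) = qf x - 2 * (x \<bullet> (- \<nu>)) + (- \<nu>) \<bullet> (- \<nu>)" by (rule qf_diff)
  have e2: "x - (l + \<nu>) = (x - l) - \<nu>" by simp
  have e3: "qf ((x - l) - \<nu>) = qf (x - l) - 2 * ((x - l) \<bullet> \<nu>) + \<nu> \<bullet> \<nu>"
    by (rule qf_diff)
  have e4: "(x - l) \<bullet> \<nu> = x \<bullet> \<nu> - l \<bullet> \<nu>" by (simp add: inner_diff_left)
  have e5: "(- \<nu>) \<bullet> (- \<nu>) = \<nu> \<bullet> \<nu>" "x \<bullet> (- \<nu>) = - (x \<bullet> \<nu>)" by simp_all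
  show ?thesis using 1 2 e1 e2 e3 e4 e5 eq by simp
qed

lemma inner_C_part:
  assumes P: "P \<in> components_in tail head C"
  shows "cobd tail head (\<lambda>v. if v \<in> C then 1 else 0) \<bullet> cobd tail head (\<lambda>v. if v \<in> P then 1 else 0)
       = cobd tail head (\<lambda>v. if v \<in> P then 1 else 0) \<bullet> cobd tail head (\<lambda>v. if v \<in> P then 1 else 0)"
proof -
  have sub: "P \<subseteq> C" using comp_props(2)[OF P] .
  have cl1: "tail e \<in> P" if "head e \<in> P" "tail e \<in> C" for e
    using comp_closed[OF P that(1) that(2), of e] by auto
  have cl2: "head e \<in> P" if "tail e \<in> P" "head e \<in> C" for e
    using comp_closed[OF P that(1) that(2), of e] by auto
  show ?thesis unfolding inner_vec_def cobd_def
    apply (intro sum.cong refl)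
    using cl1 cl2 sub by auto
qed

lemma inner_D_part:
  assumes P: "P \<in> components_in tail head (UNIV - C)"
  shows "cobd tail head (\<lambda>v. if v \<in> C then 1 else 0) \<bullet> cobd tail head (\<lambda>v. if v \<in> P then 1 else 0)
       = - (cobd tail head (\<lambda>v. if v \<in> P then 1 else 0) \<bullet> cobd tail head (\<lambda>v. if v \<in> P then 1 else 0))"
proof -
  have sub: "P \<subseteq> UNIV - C" using comp_props(2)[OF P] .
  have cl1: "tail e \<in> P" if "head e \<in> P" "tail e \<notin> C" for e
    using comp_closed[OF P that(1), of "tail e" e] that by auto
  have cl2: "head e \<in> P" if "tail e \<in> P" "head e \<notin> C" for e
    using comp_closed[OF P that(1), of "head e" e] that by auto
  show ?thesis unfolding inner_vec_def cobd_def
    apply (simp only: sum_negf[symmetric])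
    apply (intro sum.cong refl)
    using cl1 cl2 sub by auto
qed


theorem mainTheorem15:
  fixes tail head :: "'e::finite \<Rightarrow> 'v::finite" and C :: "'v set"
  assumes "graph_connected tail head"
    and "C \<noteq> {}" and "C \<noteq> UNIV"
  defines "lam \<equiv> cobd tail head (\<lambda>v. if v \<in> C then 1 else 0)"
  shows "(\<exists>A. A \<noteq> {} \<and> affine A \<and> A \<subseteq> cutspaceK tail head \<and>
             voronoi tail head 0 \<inter> voronoi tail head lam \<subseteq> A \<and>
             int (dim (cutspaceK tail head)) - aff_dim A = int (cut_rank tail head C))
       \<and> ((voronoi tail head 0 \<inter> voronoi tail head lam) face_of voronoi tail head 0 \<and>
           aff_dim (voronoi tail head 0 \<inter> voronoi tail head lam) = int (dim (cutspaceK tail head)) - 1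
           \<longrightarrow> cut_rank tail head C = 1)"
proof -
  note conn = assms(1)
  let ?L = "latticeL tail head"
  let ?K = "cutspaceK tail head"
  define CC where "CC = components_in tail head C"
  define DD where "DD = components_in tail head (UNIV - C)"
  define Ps where "Ps = CC \<union> DD"
  define ind :: "'v set \<Rightarrow> real^'v" where "ind P = (\<chi> v. if v \<in> P then 1 else 0)" for P
  define D where "D = Dm tail head"
  define one :: "real^'v" where "one = (\<chi> v. 1)"
  define U where "U = span (ind ` Ps)"
  define U' where "U' = {f \<in> U. \<forall>y\<in>span {one}. orthogonal y f}"
  define W where "W = {y \<in> ?K. \<forall>a \<in> D ` U. orthogonal a y}"
  define I where "I = voronoi tail head 0 \<inter> voronoi tail head lam"
  have finPs: "finite Ps" "finite CC" "finite DD" by simp_all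
  have CCne: "P \<noteq> {}" "P \<subseteq> C" if "P \<in> CC" for P
    using comp_props[of P tail head C] that unfolding CC_def by auto
  have DDne: "P \<noteq> {}" "P \<subseteq> UNIV - C" if "P \<in> DD" for P
    using comp_props[of P tail head "UNIV - C"] that unfolding DD_def by auto
  have Psne: "P \<noteq> {}" if "P \<in> Ps" for P using CCne(1) DDne(1) that unfolding Ps_def by blast
  have Psdisj: "P \<inter> Q = {}" if PQ: "P \<in> Ps" "Q \<in> Ps" "P \<noteq> Q" for P Q
  proof -
    consider "P \<in> CC" "Q \<in> CC" | "P \<in> DD" "Q \<in> DD" | "P \<in> CC" "Q \<in> DD" | "P \<in> DD" "Q \<in> CC"
      using PQ(1,2) unfolding Ps_def by blast
    then show ?thesis
    proof cases
      case 1 then show ?thesis using comp_disj[of P tail head C Q] PQ(3) unfolding CC_def by auto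
    next
      case 2 then show ?thesis using comp_disj[of P tail head "UNIV - C" Q] PQ(3) unfolding DD_def by auto
    next
      case 3 then show ?thesis using CCne(2) DDne(2) by blast
    next
      case 4 then show ?thesis using CCne(2) DDne(2) by blast
    qed
  qed
  have Pscover: "\<exists>P\<in>Ps. v \<in> P" for v
  proof (cases "v \<in> C")
    case True then show ?thesis using comp_union[of tail head C] unfolding CC_def Ps_def by blast
  next
    case False then show ?thesis using comp_union[of tail head "UNIV - C"] unfolding DD_def Ps_def by blast
  qed
  have CCDD: "CC \<inter> DD = {}" using CCne DDne by blast
  have cardPs: "card Ps = card CC + card DD" unfolding Ps_def using card_Un_disjoint finPs CCDD by blast
  have "CC \<noteq> {}" using comp_union[of tail head C] assms(2) CC_def by auto
  then have k1: "card CC \<ge> 1" using finPs by (simp add: Suc_le_eq card_gt_0_iff)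
  have "DD \<noteq> {}" using comp_union[of tail head "UNIV - C"] assms(3) DD_def by auto
  then have r1: "card DD \<ge> 1" using finPs by (simp add: Suc_le_eq card_gt_0_iff)
  have cr: "cut_rank tail head C = card Ps - 1"
    unfolding cut_rank_def cardPs CC_def DD_def ..
  have cr1: "cut_rank tail head C \<ge> 1" using cr cardPs k1 r1 by simp

  have indv: "ind P $ v = (if v \<in> P then 1 else 0)" for P v unfolding ind_def by simp
  have inj: "inj_on ind Ps"
  proof (rule inj_onI)
    fix P Q assume "ind P = ind Q"
    then have "(if v \<in> P then 1 else 0) = ((if v \<in> Q then 1 else 0)::real)" for v
      by (metis indv)
    then have "v \<in> P \<longleftrightarrow> v \<in> Q" for v by (metis zero_neq_one)
    then show "P = Q" by blast
  qed
  have po: "pairwise orthogonal (ind ` Ps)"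
  proof (rule pairwiseI)
    fix x y assume "x \<in> ind ` Ps" "y \<in> ind ` Ps" "x \<noteq> y"
    then obtain P Q where PQ: "P \<in> Ps" "Q \<in> Ps" "x = ind P" "y = ind Q" "P \<noteq> Q" by blast
    then have dj: "P \<inter> Q = {}" using Psdisj by blast
    have "x \<bullet> y = (\<Sum>v\<in>UNIV. ind P $ v * ind Q $ v)" unfolding inner_vec_def PQ by simp
    also have "\<dots> = 0" using dj by (intro sum.neutral) (auto simp: indv)
    finally show "orthogonal x y" unfolding orthogonal_def .
  qed
  have n0: "0 \<notin> ind ` Ps"
  proof
    assume "0 \<in> ind ` Ps"
    then obtain P where "P \<in> Ps" "ind P = 0" by auto
    moreover then obtain v where "v \<in> P" using Psne by blast
    ultimately show False by (metis indv zero_index zero_neq_one)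
  qed
  have indep: "independent (ind ` Ps)" by (rule pairwise_orthogonal_independent[OF po n0])
  have dimU: "dim U = card Ps"
    unfolding U_def using dim_span_eq_card_independent[OF indep] card_image[OF inj] by simp
  have oneU: "one \<in> U"
  proof -
    have "one = (\<Sum>P\<in>Ps. ind P)"
    proof (subst vec_eq_iff, intro allI)
      fix v
      obtain P0 where P0: "P0 \<in> Ps" "v \<in> P0" using Pscover by blast
      have "(\<Sum>P\<in>Ps. ind P) $ v = (\<Sum>P\<in>Ps. ind P $ v)" by (rule sum_component)
      also have "\<dots> = ind P0 $ v + (\<Sum>P\<in>Ps - {P0}. ind P $ v)"
        using P0 finPs by (simp add: sum.remove)
      also have "(\<Sum>P\<in>Ps - {P0}. ind P $ v) = 0"
        using Psdisj P0 by (intro sum.neutral) (auto simp: indv)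
      finally show "one $ v = (\<Sum>P\<in>Ps. ind P) $ v" using P0 by (simp add: indv one_def)
    qed
    then show ?thesis unfolding U_def by (simp add: span_sum span_base)
  qed
  have one_ne: "one \<noteq> 0"
  proof
    assume "one = 0"
    then have "one $ undefined = 0 $ undefined" by simp
    then show False unfolding one_def by simp
  qed
  have oneone: "one \<bullet> one = real CARD('v)" unfolding inner_vec_def one_def by simp
  have oneone_pos: "one \<bullet> one > 0" using oneone by simp
  have subU: "subspace U" unfolding U_def by simp
  have sp1U: "span {one} \<subseteq> U" using oneU subU by (simp add: span_minimal)
  have subU': "subspace U'"
  proof -
    have e: "U' = U \<inter> {f. \<forall>y\<in>span {one}. orthogonal y f}" unfolding U'_def by auto
    show ?thesis unfolding e by (rule subspace_inter[OF subU subspace_orthogonal_to_vectors])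
  qed
  have dimU': "dim U' + 1 = dim U"
    using dim_subspace_orthogonal_to_vectors[OF subspace_span subU sp1U] one_ne
    unfolding U'_def by simp
  have Done: "D one = 0" unfolding D_def Dm_def cobd_def one_def by (simp add: vec_eq_iff)
  have Dlin: "linear D" unfolding D_def by (rule linear_Dm)
  have DU: "D ` U = D ` U'"
  proof
    show "D ` U' \<subseteq> D ` U" unfolding U'_def by auto
    show "D ` U \<subseteq> D ` U'"
    proof
      fix z assume "z \<in> D ` U"
      then obtain f where f: "f \<in> U" "z = D f" by auto
      define c where "c = (one \<bullet> f) / (one \<bullet> one)"
      define f' where "f' = f - c *\<^sub>R one"
      have "f' \<in> U" unfolding f'_def using f oneU subU by (simp add: subspace_diff subspace_scale)
      moreover have "orthogonal y f'" if ysp: "y \<in> span {one}" for y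
      proof -
        obtain t where "y = t *\<^sub>R one" using ysp span_singleton by auto
        then show ?thesis unfolding orthogonal_def f'_def c_def using oneone_pos
          by (simp add: inner_diff_right)
      qed
      moreover have "D f' = D f" unfolding f'_def
        using Dlin Done by (simp add: linear_diff linear_scale)
      ultimately have "f' \<in> U'" "D f' = z" unfolding U'_def using f by auto
      then show "z \<in> D ` U'" by (metis image_eqI)
    qed
  qed
  have injD: "inj_on D U'"
  proof (rule inj_onI)
    fix f g assume fg: "f \<in> U'" "g \<in> U'" "D f = D g"
    define h where "h = f - g"
    have hU: "h \<in> U'" unfolding h_def using subU' fg subspace_diff by blast
    have "D h = 0" unfolding h_def using Dlin fg by (simp add: linear_diff)
    then have hc: "h $ v = h $ w" for v w using kernel_const[OF conn] unfolding D_def by blast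
    fix v0
    have heq: "h = (h $ v0) *\<^sub>R one" unfolding one_def using hc by (simp add: vec_eq_iff)
    have "orthogonal one h" using hU unfolding U'_def by (simp add: span_base)
    then have "one \<bullet> h = 0" unfolding orthogonal_def .
    then have "(h $ v0) * (one \<bullet> one) = 0" using heq by (metis inner_scaleR_right)
    then have "h $ v0 = 0" using oneone_pos by simp
    then have "h = 0" using heq by simp
    then show "f = g" unfolding h_def by simp
  qed
  have dimDU: "dim (D ` U) = card Ps - 1"
  proof -
    have "span U' = U'" using subU' by (simp add: span_eq_iff)
    then have "dim (D ` U') = dim U'" using eucl.dim_image_eq[OF Dlin] injD by metis
    then show ?thesis using DU dimU' dimU by simp
  qed
  have KD: "?K = D ` UNIV" unfolding D_def K_eq by simp
  have subK: "subspace ?K" unfolding KD using linear_subspace_image[OF Dlin subspace_UNIV] .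
  have subDU: "subspace (D ` U)" using linear_subspace_image[OF Dlin subU] .
  have DUK: "D ` U \<subseteq> ?K" unfolding KD by auto
  have dimW: "dim W + dim (D ` U) = dim ?K"
    unfolding W_def by (rule dim_subspace_orthogonal_to_vectors[OF subDU subK DUK])
  have subW: "subspace W"
  proof -
    have e: "W = ?K \<inter> {y. \<forall>a\<in>D ` U. orthogonal a y}" unfolding W_def by auto
    show ?thesis unfolding e by (rule subspace_inter[OF subK subspace_orthogonal_to_vectors])
  qed
  have WK: "W \<subseteq> ?K" unfolding W_def by auto

  have Dind: "D (ind P) = cobd tail head (\<lambda>v. if v \<in> P then 1 else 0)" for P
    unfolding D_def Dm_def ind_def cobd_def by simp
  have intf: "(\<lambda>v. (if v \<in> P then 1 else 0) :: real) = (\<lambda>v. of_int (if v \<in> P then 1 else 0))" for P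
    by auto
  have orth: "(x - y) \<bullet> D (ind P) = 0" if xy: "x \<in> I" "y \<in> I" and P: "P \<in> Ps" for x y P
  proof -
    define \<nu> where "\<nu> = cobd tail head (\<lambda>v. if v \<in> P then 1 else 0)"
    have cond: "(\<forall>\<mu>\<in>?L. qf (z - 0) \<le> qf (z - \<mu>)) \<and> (\<forall>\<mu>\<in>?L. qf (z - lam) \<le> qf (z - \<mu>))"
      if "z \<in> I" for z
      using that unfolding I_def voronoi_def by auto
    have nuL: "\<nu> \<in> ?L" unfolding \<nu>_def by (rule cobd_int) auto
    have nnuL: "- \<nu> \<in> ?L" unfolding \<nu>_def cobd_neg by (rule cobd_int) auto
    have lmL: "lam - \<nu> \<in> ?L" unfolding \<nu>_def lam_def cobd_diff by (rule cobd_int) auto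
    have lpL: "lam + \<nu> \<in> ?L" unfolding \<nu>_def lam_def cobd_add by (rule cobd_int) auto
    have "x \<bullet> \<nu> = y \<bullet> \<nu>"
    proof (cases "P \<in> CC")
      case True
      have eq: "lam \<bullet> \<nu> = \<nu> \<bullet> \<nu>" unfolding lam_def \<nu>_def
        using inner_C_part True unfolding CC_def by blast
      have "2 * (x \<bullet> \<nu>) = \<nu> \<bullet> \<nu>" "2 * (y \<bullet> \<nu>) = \<nu> \<bullet> \<nu>"
        using key_pos[OF _ _ nuL lmL eq] cond xy by blast+
      then show ?thesis by simp
    next
      case False
      then have "P \<in> DD" using P unfolding Ps_def by blast
      then have eq: "lam \<bullet> \<nu> = - (\<nu> \<bullet> \<nu>)" unfolding lam_def \<nu>_def
        using inner_D_part unfolding DD_def by blast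
      have "2 * (x \<bullet> \<nu>) = - (\<nu> \<bullet> \<nu>)" "2 * (y \<bullet> \<nu>) = - (\<nu> \<bullet> \<nu>)"
        using key_neg[OF _ _ nnuL lpL eq] cond xy by blast+
      then show ?thesis by simp
    qed
    then show ?thesis unfolding Dind \<nu>_def[symmetric] by (simp add: inner_diff_left)
  qed
  have IK: "I \<subseteq> ?K" unfolding I_def voronoi_def by auto
  obtain x0 where x0: "x0 \<in> ?K" "I \<noteq> {} \<Longrightarrow> x0 \<in> I"
  proof (cases "I = {}")
    case True then show ?thesis using that[of 0] subK subspace_0 by blast
  next
    case False then show ?thesis using that IK by blast
  qed
  define A where "A = (+) x0 ` W"
  have spanDU: "D ` U = span (D ` ind ` Ps)" unfolding U_def using linear_span_image[OF Dlin] by simp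
  have IA: "I \<subseteq> A"
  proof
    fix y assume y: "y \<in> I"
    then have x0I: "x0 \<in> I" using x0 by blast
    have "y - x0 \<in> ?K" using subspace_diff[OF subK] IK y x0 by blast
    moreover have "orthogonal a (y - x0)" if a: "a \<in> D ` U" for a
    proof -
      have "a \<in> span (D ` ind ` Ps)" using a spanDU by simp
      moreover have "orthogonal (y - x0) b" if "b \<in> D ` ind ` Ps" for b
        using that orth[OF y x0I] unfolding orthogonal_def by blast
      ultimately have "orthogonal (y - x0) a" by (rule orthogonal_to_span)
      then show ?thesis by (simp add: orthogonal_commute)
    qed
    ultimately have "y - x0 \<in> W" unfolding W_def by blast
    then show "y \<in> A" unfolding A_def by (metis add_diff_cancel_left' diff_add_cancel image_eqI add.commute)
  qed
  have Ane: "A \<noteq> {}" unfolding A_def using subW subspace_0 by blast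
  have Aaff: "affine A" unfolding A_def using affine_translation subspace_imp_affine[OF subW] by blast
  have AK: "A \<subseteq> ?K" unfolding A_def using WK x0(1) subspace_add[OF subK] by blast
  have affA: "aff_dim A = int (dim W)" unfolding A_def aff_dim_translation_eq
    by (rule aff_dim_subspace[OF subW])
  have codim: "int (dim ?K) - aff_dim A = int (cut_rank tail head C)"
    using affA dimW dimDU cr by simp
  have part1: "\<exists>A. A \<noteq> {} \<and> affine A \<and> A \<subseteq> ?K \<and> I \<subseteq> A \<and>
             int (dim ?K) - aff_dim A = int (cut_rank tail head C)"
    using Ane Aaff AK IA codim by blast
  have part2: "cut_rank tail head C = 1" if h: "aff_dim I = int (dim ?K) - 1"
  proof (cases "I = {}")
    case True
    then have "aff_dim I = -1" by simp
    then have "dim ?K = 0" using h by simp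
    moreover have "aff_dim A \<ge> 0" using Ane aff_dim_empty[of A] aff_dim_geq[of A] by linarith
    ultimately show ?thesis using codim cr1 by linarith
  next
    case False
    have "aff_dim I \<le> aff_dim A" using aff_dim_subset[OF IA] .
    then show ?thesis using h codim cr1 by linarith
  qed
  show ?thesis unfolding I_def[symmetric]
  proof (intro conjI impI)
    show "\<exists>A. A \<noteq> {} \<and> affine A \<and> A \<subseteq> ?K \<and> I \<subseteq> A \<and>
             int (dim ?K) - aff_dim A = int (cut_rank tail head C)" by (rule part1)
  next
    assume "I face_of voronoi tail head 0 \<and> aff_dim I = int (dim ?K) - 1"
    then show "cut_rank tail head C = 1" using part2 by blast
  qed
qed

end
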